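(* Let $H$ be a connected graph of order $a \in \mathbb{N}$. Then for every $b \in \mathbb{N}$, $R_\mathrm{ord}(H, P_b^\mathrm{mon}) = 1 + (a-1)(b-1)$.
   Context: All graphs are finite, simple and undirected, and a graph of order $n$ has vertex set $\{0,1,\ldots,n-1\}$; $K_n$ is the complete graph on $\{0,\ldots,n-1\}$. A $2$-edge-coloring of $K_n$ assigns each edge a color in $\{1,2\}$. For a graph $H$ and such a coloring, an embedding of $H$ in color $j$ is an injective map $\varphi\colon V(H)\to V(K_n)$ such that for every edge $uv$ of $H$ the edge $\{\varphi(u),\varphi(v)\}$ has color $j$; it is increasing if $\varphi(0)<\varphi(1)<\cdots<\varphi(|H|-1)$. The ordered Ramsey number $R_\mathrm{ord}(H_1,H_2)$ is the smallest $n\in\mathbb{N}$ such that every $2$-edge-coloring of $K_n$ admits an increasing embedding of $H_1$ in color $1$ or an increasing embedding of $H_2$ in color $2$. The monotone path $P_n^\mathrm{mon}$ is the graph of order $n$ in which two vertices are adjacent iff they are consecutive integers. *)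

theory Defs
  imports Main
begin

definition graph_on :: "nat \<Rightarrow> nat set set \<Rightarrow> bool" where
  "graph_on n E \<longleftrightarrow> (\<forall>e\<in>E. \<exists>u v. e = {u, v} \<and> u \<noteq> v \<and> u < n \<and> v < n)"

definition adj :: "nat set set \<Rightarrow> (nat \<times> nat) set" where
  "adj E = {(x, y). {x, y} \<in> E}"

definition connected_graph :: "nat \<Rightarrow> nat set set \<Rightarrow> bool" where
  "connected_graph n E \<longleftrightarrow> graph_on n E \<and> (\<forall>u<n. \<forall>v<n. (u, v) \<in> (adj E)\<^sup>*)"

definition two_coloring :: "nat \<Rightarrow> (nat set \<Rightarrow> nat) \<Rightarrow> bool" where
  "two_coloring n c \<longleftrightarrow> (\<forall>u<n. \<forall>v<n. u \<noteq> v \<longrightarrow> c {u, v} \<in> {1, 2})"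

text \<open>Increasing embedding of the graph (k, E) of order k into K_n in color j.
  Strict monotonicity implies injectivity.\<close>
definition incr_embedding ::
  "nat \<Rightarrow> nat set set \<Rightarrow> nat \<Rightarrow> (nat set \<Rightarrow> nat) \<Rightarrow> nat \<Rightarrow> (nat \<Rightarrow> nat) \<Rightarrow> bool" where
  "incr_embedding k E n c j \<phi> \<longleftrightarrow>
     (\<forall>i<k. \<phi> i < n) \<and> (\<forall>i i'. i < i' \<and> i' < k \<longrightarrow> \<phi> i < \<phi> i') \<and>
     (\<forall>u v. {u, v} \<in> E \<longrightarrow> c {\<phi> u, \<phi> v} = j)"

definition ord_ramsey_prop ::
  "nat \<Rightarrow> nat set set \<Rightarrow> nat \<Rightarrow> nat set set \<Rightarrow> nat \<Rightarrow> bool" where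
  "ord_ramsey_prop k1 E1 k2 E2 n \<longleftrightarrow>
     (\<forall>c. two_coloring n c \<longrightarrow>
        (\<exists>\<phi>. incr_embedding k1 E1 n c 1 \<phi>) \<or> (\<exists>\<phi>. incr_embedding k2 E2 n c 2 \<phi>))"

definition R_ord :: "nat \<Rightarrow> nat set set \<Rightarrow> nat \<Rightarrow> nat set set \<Rightarrow> nat" where
  "R_ord k1 E1 k2 E2 = (LEAST n. ord_ramsey_prop k1 E1 k2 E2 n)"

definition mon_path :: "nat \<Rightarrow> nat set set" where
  "mon_path n = {{i, i + 1} | i. i + 1 < n}"

end

theory Submission
  imports Defs
begin

definition is_path2 :: "(nat set \<Rightarrow> nat) \<Rightarrow> nat \<Rightarrow> nat \<Rightarrow> (nat \<Rightarrow> nat) \<Rightarrow> bool" where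
  "is_path2 c k v \<phi> \<longleftrightarrow> k \<ge> 1 \<and> \<phi> (k - 1) = v \<and>
     (\<forall>i i'. i < i' \<and> i' < k \<longrightarrow> \<phi> i < \<phi> i') \<and>
     (\<forall>i. i + 1 < k \<longrightarrow> c {\<phi> i, \<phi> (i + 1)} = 2)"

definition flen :: "(nat set \<Rightarrow> nat) \<Rightarrow> nat \<Rightarrow> nat" where
  "flen c v = Max {k. \<exists>\<phi>. is_path2 c k v \<phi>}"

lemma path_ge: "is_path2 c k v \<phi> \<Longrightarrow> i < k \<Longrightarrow> \<phi> i \<ge> i"
proof (induction i)
  case 0 then show ?case by simp
next
  case (Suc i)
  then have "\<phi> i < \<phi> (Suc i)" unfolding is_path2_def by auto
  with Suc show ?case by simp
qed

lemma path_le: "is_path2 c k v \<phi> \<Longrightarrow> i < k \<Longrightarrow> \<phi> i \<le> v"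
  unfolding is_path2_def
  by (metis One_nat_def Suc_pred' diff_less le_less less_Suc_eq zero_less_one
      order.strict_trans1 linorder_not_less)

lemma path_len: "is_path2 c k v \<phi> \<Longrightarrow> k \<le> v + 1"
  using path_ge[of c k v \<phi> "k - 1"] unfolding is_path2_def by auto

lemma flen_set: "finite {k. \<exists>\<phi>. is_path2 c k v \<phi>}" "1 \<in> {k. \<exists>\<phi>. is_path2 c k v \<phi>}"
proof -
  show "finite {k. \<exists>\<phi>. is_path2 c k v \<phi>}"
    by (rule finite_subset[of _ "{..v+1}"]) (auto dest: path_len)
  have "is_path2 c 1 v (\<lambda>_. v)" unfolding is_path2_def by auto
  then show "1 \<in> {k. \<exists>\<phi>. is_path2 c k v \<phi>}" by blast
qed

lemma flen_path: "\<exists>\<phi>. is_path2 c (flen c v) v \<phi>"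
proof -
  have "flen c v \<in> {k. \<exists>\<phi>. is_path2 c k v \<phi>}"
    unfolding flen_def by (rule Max_in[OF flen_set(1)]) (use flen_set(2)[of c v] in blast)
  then show ?thesis by blast
qed

lemma flen_ge1: "flen c v \<ge> 1"
  unfolding flen_def using flen_set by (intro Max_ge) auto

lemma flen_step:
  assumes "u < v" "c {u, v} = 2"
  shows "flen c v \<ge> flen c u + 1"
proof -
  obtain \<phi> where p: "is_path2 c (flen c u) u \<phi>" using flen_path by blast
  define k where "k = flen c u"
  define \<psi> where "\<psi> = \<phi>(k := v)"
  have k1: "k \<ge> 1" using p k_def unfolding is_path2_def by auto
  have "is_path2 c (k + 1) v \<psi>"
    unfolding is_path2_def
  proof (intro conjI allI impI)
    show "\<psi> (k + 1 - 1) = v" by (simp add: \<psi>_def)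
  next
    fix i i' assume h: "i < i' \<and> i' < k + 1"
    show "\<psi> i < \<psi> i'"
    proof (cases "i' = k")
      case True
      then have "\<phi> i \<le> u" using path_le[OF p, of i] h k_def by auto
      then show ?thesis using True h assms by (simp add: \<psi>_def)
    next
      case False
      then show ?thesis using h p k_def unfolding is_path2_def \<psi>_def by auto
    qed
  next
    fix i assume h: "i + 1 < k + 1"
    show "c {\<psi> i, \<psi> (i + 1)} = 2"
    proof (cases "i + 1 = k")
      case True
      then have "i = k - 1" by simp
      then have "\<phi> i = u" using p k_def unfolding is_path2_def by simp
      then show ?thesis using True assms by (simp add: \<psi>_def)
    next
      case False
      then show ?thesis using h p k_def unfolding is_path2_def \<psi>_def by auto
    qed
  qed simp
  then have "k + 1 \<in> {k. \<exists>\<phi>. is_path2 c k v \<phi>}" by blast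
  then show ?thesis unfolding flen_def k_def using flen_set by (intro Max_ge) auto
qed

lemma upper:
  assumes a1: "a \<ge> 1" and b1: "b \<ge> 1" and g: "graph_on a H"
  shows "ord_ramsey_prop a H b (mon_path b) (1 + (a - 1) * (b - 1))"
  unfolding ord_ramsey_prop_def
proof (intro allI impI)
  fix c assume tc: "two_coloring (1 + (a - 1) * (b - 1)) c"
  define n where "n = 1 + (a - 1) * (b - 1)"
  show "(\<exists>\<phi>. incr_embedding a H (1 + (a - 1) * (b - 1)) c 1 \<phi>) \<or>
        (\<exists>\<phi>. incr_embedding b (mon_path b) (1 + (a - 1) * (b - 1)) c 2 \<phi>)"
  proof (cases "\<exists>v<n. flen c v \<ge> b")
    case True
    then obtain v where v: "v < n" "flen c v \<ge> b" by blast
    obtain \<phi> where p: "is_path2 c (flen c v) v \<phi>" using flen_path by blast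
    have "incr_embedding b (mon_path b) n c 2 \<phi>"
      unfolding incr_embedding_def
    proof (intro conjI allI impI)
      fix i assume "i < b"
      then show "\<phi> i < n" using path_le[OF p, of i] v by auto
    next
      fix i i' assume "i < i' \<and> i' < b"
      then show "\<phi> i < \<phi> i'" using p v unfolding is_path2_def by auto
    next
      fix u w assume "{u, w} \<in> mon_path b"
      then obtain i where i: "{u, w} = {i, i + 1}" "i + 1 < b" unfolding mon_path_def by auto
      have ci: "c {\<phi> i, \<phi> (i + 1)} = 2" using p v i unfolding is_path2_def by auto
      from i(1) have "(u = i \<and> w = i + 1) \<or> (u = i + 1 \<and> w = i)"
        by (auto simp: doubleton_eq_iff)
      then show "c {\<phi> u, \<phi> w} = 2" using ci by (auto simp: insert_commute)
    qed
    then show ?thesis unfolding n_def by blast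
  next
    case False
    then have fl: "\<forall>v<n. flen c v \<in> {1..b-1}" using flen_ge1 by force
    have "\<exists>t\<in>{1..b-1}. card {v. v < n \<and> flen c v = t} \<ge> a"
    proof (rule ccontr)
      assume "\<not> ?thesis"
      then have lt: "\<forall>t\<in>{1..b-1}. card {v. v < n \<and> flen c v = t} \<le> a - 1" by force
      have eq: "{..<n} = (\<Union>t\<in>{1..b-1}. {v. v < n \<and> flen c v = t})" using fl by auto
      have "n = card (\<Union>t\<in>{1..b-1}. {v. v < n \<and> flen c v = t})" using eq by (metis card_lessThan)
      also have "\<dots> = (\<Sum>t\<in>{1..b-1}. card {v. v < n \<and> flen c v = t})"
        by (rule card_UN_disjoint) auto
      also have "\<dots> \<le> card {1..b-1} * (a - 1)" using sum_bounded_above[of "{1..b-1}" "\<lambda>t. card {v. v < n \<and> flen c v = t}" "a - 1"] lt by simp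
      also have "\<dots> = (b - 1) * (a - 1)" by simp
      finally show False unfolding n_def by (simp add: mult.commute)
    qed
    then obtain t where t: "card {v. v < n \<and> flen c v = t} \<ge> a" by blast
    define S where "S = {v. v < n \<and> flen c v = t}"
    define xs where "xs = sorted_list_of_set S"
    have finS: "finite S" unfolding S_def by auto
    have sw: "sorted_wrt (<) xs" unfolding xs_def by simp
    have lxs: "length xs \<ge> a" using t finS unfolding xs_def S_def by simp
    have inS: "\<And>i. i < a \<Longrightarrow> xs ! i \<in> S"
      using lxs finS unfolding xs_def by (metis nth_mem order.strict_trans2 set_sorted_list_of_set)
    have mono: "\<And>i i'. i < i' \<Longrightarrow> i' < a \<Longrightarrow> xs ! i < xs ! i'"
      using sw lxs by (meson order.strict_trans2 sorted_wrt_nth_less)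
    have "incr_embedding a H n c 1 (\<lambda>i. xs ! i)"
      unfolding incr_embedding_def
    proof (intro conjI allI impI)
      fix i assume "i < a" then show "xs ! i < n" using inS unfolding S_def by auto
    next
      fix i i' assume "i < i' \<and> i' < a" then show "xs ! i < xs ! i'" using mono by auto
    next
      fix u w assume e: "{u, w} \<in> H"
      then obtain x y where xy: "{u, w} = {x, y}" "x \<noteq> y" "x < a" "y < a"
        using g unfolding graph_on_def by blast
      then have uw: "u \<noteq> w" "u < a" "w < a" by (auto simp: doubleton_eq_iff)
      have gen: "c {xs ! p, xs ! q} = 1" if pq: "p < q" "q < a" for p q
      proof -
        have lt: "xs ! p < xs ! q" using mono pq by auto
        have "c {xs ! p, xs ! q} \<in> {1, 2}" using tc inS pq lt unfolding two_coloring_def S_def n_def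
          by (metis (no_types, lifting) less_imp_neq mem_Collect_eq order.strict_trans)
        moreover have "c {xs ! p, xs ! q} \<noteq> 2"
        proof
          assume "c {xs ! p, xs ! q} = 2"
          then have "flen c (xs ! q) \<ge> flen c (xs ! p) + 1" using flen_step lt by blast
          moreover have "flen c (xs ! q) = t" "flen c (xs ! p) = t" using inS pq unfolding S_def by auto
          ultimately show False by simp
        qed
        ultimately show ?thesis by auto
      qed
      show "c {xs ! u, xs ! w} = 1"
      proof (cases "u < w")
        case True then show ?thesis using gen uw by auto
      next
        case False then have "w < u" using uw by auto
        then show ?thesis using gen[of w u] uw by (simp add: insert_commute)
      qed
    qed
    then show ?thesis unfolding n_def by blast
  qed
qed

lemma lower:
  assumes a1: "a \<ge> 1" and b1: "b \<ge> 1" and cg: "connected_graph a H"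
    and nle: "n \<le> (a - 1) * (b - 1)"
  shows "\<not> ord_ramsey_prop a H b (mon_path b) n"
proof (cases "n = 0")
  case True
  have tc0: "two_coloring n (\<lambda>_. 1)" using True unfolding two_coloring_def by simp
  have emb: "\<not> incr_embedding k E n cc j \<phi>" if "k \<ge> 1" for k E cc j \<phi>
  proof
    assume "incr_embedding k E n cc j \<phi>"
    then have "\<forall>i<k. \<phi> i < n" unfolding incr_embedding_def by blast
    moreover have "0 < k" using that by simp
    ultimately have "\<phi> 0 < n" by blast
    then show False using True by simp
  qed
  show ?thesis unfolding ord_ramsey_prop_def
  proof
    assume h: "\<forall>c. two_coloring n c \<longrightarrow>
        (\<exists>\<phi>. incr_embedding a H n c 1 \<phi>) \<or> (\<exists>\<phi>. incr_embedding b (mon_path b) n c 2 \<phi>)"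
    from h[rule_format, OF tc0] show False using emb[OF a1] emb[OF b1] by blast
  qed
next
  case False
  define m where "m = a - 1"
  have "(a - 1) * (b - 1) \<noteq> 0" using False nle by linarith
  then have m0: "m > 0" unfolding m_def by simp
  define c where "c = (\<lambda>e::nat set. if \<forall>x\<in>e. \<forall>y\<in>e. x div m = y div m then 1 else (2::nat))"
  have bl: "(\<forall>u\<in>{x,y}. \<forall>v\<in>{x,y}. u div m = v div m) \<longleftrightarrow> x div m = y div m" for x y
    by (simp only: ball_simps) (simp add: eq_commute[of "y div m"])
  have c1: "\<And>x y. c {x, y} = 1 \<longleftrightarrow> x div m = y div m" unfolding c_def using bl by presburger
  have c2: "\<And>x y. c {x, y} = 2 \<longleftrightarrow> x div m \<noteq> y div m" unfolding c_def using bl by presburger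
  have tc: "two_coloring n c" unfolding two_coloring_def c_def by auto
  have no1: "\<not> incr_embedding a H n c 1 \<phi>" for \<phi>
  proof
    assume emb: "incr_embedding a H n c 1 \<phi>"
    have same: "\<phi> v div m = \<phi> 0 div m" if "v < a" for v
    proof -
      have "(0, v) \<in> (adj H)\<^sup>*" using cg that a1 unfolding connected_graph_def by auto
      then show ?thesis
      proof (induction rule: rtrancl_induct)
        case base then show ?case by simp
      next
        case (step y z)
        then have "{y, z} \<in> H" unfolding adj_def by auto
        then have "c {\<phi> y, \<phi> z} = 1" using emb unfolding incr_embedding_def by auto
        then show ?case using step c1 by auto
      qed
    qed
    have ge: "\<phi> i \<ge> \<phi> 0 + i" if "i < a" for i
      using that
    proof (induction i)
      case 0 then show ?case by simp
    next
      case (Suc i)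
      then have "\<phi> i < \<phi> (Suc i)" using emb unfolding incr_embedding_def by auto
      with Suc show ?case by simp
    qed
    have am: "a - 1 < a" "a - 1 = m" using a1 m_def by auto
    have "\<phi> (a - 1) \<ge> \<phi> 0 + m" using ge[OF am(1)] am by simp
    then have "\<phi> (a - 1) div m \<ge> (\<phi> 0 + m) div m" by (rule div_le_mono)
    also have "(\<phi> 0 + m) div m = \<phi> 0 div m + 1" using m0 by (simp add: div_add_self2)
    finally show False using same[OF am(1)] by simp
  qed
  have no2: "\<not> incr_embedding b (mon_path b) n c 2 \<phi>" for \<phi>
  proof
    assume emb: "incr_embedding b (mon_path b) n c 2 \<phi>"
    have ge: "\<phi> i div m \<ge> i" if "i < b" for i
      using that
    proof (induction i)
      case 0 then show ?case by simp
    next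
      case (Suc i)
      then have lt: "\<phi> i < \<phi> (Suc i)" using emb unfolding incr_embedding_def by auto
      have "{i, i + 1} \<in> mon_path b" using Suc.prems unfolding mon_path_def by auto
      then have "c {\<phi> i, \<phi> (i + 1)} = 2" using emb unfolding incr_embedding_def by auto
      then have ne: "\<phi> i div m \<noteq> \<phi> (Suc i) div m" using c2 by simp
      have "\<phi> i div m \<le> \<phi> (Suc i) div m" using lt by (simp add: div_le_mono)
      with ne Suc show ?case by simp
    qed
    have "\<phi> (b - 1) < n" using emb b1 unfolding incr_embedding_def by auto
    then have "\<phi> (b - 1) < m * (b - 1)" using nle m_def by simp
    then have "\<phi> (b - 1) div m < b - 1" using m0 by (simp add: div_less_iff_less_mult mult.commute)
    moreover have "\<phi> (b - 1) div m \<ge> b - 1" using ge b1 by simp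
    ultimately show False by simp
  qed
  show ?thesis unfolding ord_ramsey_prop_def using tc no1 no2 by blast
qed

theorem theorem4p1:
  fixes a b :: nat and H :: "nat set set"
  assumes "a \<ge> 1" and "b \<ge> 1"
    and "connected_graph a H"
  shows "R_ord a H b (mon_path b) = 1 + (a - 1) * (b - 1)"
  unfolding R_ord_def
proof (rule Least_equality)
  show "ord_ramsey_prop a H b (mon_path b) (1 + (a - 1) * (b - 1))"
    using upper assms unfolding connected_graph_def by blast
next
  fix y assume "ord_ramsey_prop a H b (mon_path b) y"
  then show "1 + (a - 1) * (b - 1) \<le> y" using lower[OF assms, of y] by linarith
qed

end
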